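(* Let $S$ be an AG-groupoid with a left identity. If $B$ is a bi-ideal of $S$ with $B^{2}=B$, then $B$ is a (two-sided) ideal of $S$, i.e. $SB\subseteq B$ and $BS\subseteq B$.
   Context: An AG-groupoid is a set $S$ with a binary operation satisfying $(ab)c=(cb)a$ for all $a,b,c\in S$. A left identity is an element $e$ with $ea=a$ for all $a\in S$. For nonempty subsets, $AB=\{ab:a\in A,b\in B\}$, $B^{2}=BB$. A bi-ideal of $S$ is a nonempty subset $B$ with $BB\subseteq B$ and $(BS)B\subseteq B$. *)

theory Defs
  imports Main
begin

text \<open>An AG-groupoid is modelled as a type 'a (the whole set S) with a binary operation m.\<close>

definition AG_groupoid :: "('a \<Rightarrow> 'a \<Rightarrow> 'a) \<Rightarrow> bool" where
  "AG_groupoid m \<longleftrightarrow> (\<forall>a b c. m (m a b) c = m (m c b) a)"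

definition left_identity :: "('a \<Rightarrow> 'a \<Rightarrow> 'a) \<Rightarrow> 'a \<Rightarrow> bool" where
  "left_identity m e \<longleftrightarrow> (\<forall>a. m e a = a)"

definition setmul :: "('a \<Rightarrow> 'a \<Rightarrow> 'a) \<Rightarrow> 'a set \<Rightarrow> 'a set \<Rightarrow> 'a set" where
  "setmul m A B = {m a b | a b. a \<in> A \<and> b \<in> B}"

definition bi_ideal :: "('a \<Rightarrow> 'a \<Rightarrow> 'a) \<Rightarrow> 'a set \<Rightarrow> bool" where
  "bi_ideal m B \<longleftrightarrow> B \<noteq> {} \<and> setmul m B B \<subseteq> B \<and> setmul m (setmul m B UNIV) B \<subseteq> B"

end

theory Submission
  imports Defs
begin

theorem lemma1:
  fixes m :: "'a \<Rightarrow> 'a \<Rightarrow> 'a" and e :: 'a and B :: "'a set"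
  assumes "AG_groupoid m"
    and "left_identity m e"
    and "bi_ideal m B"
    and "setmul m B B = B"
  shows "setmul m UNIV B \<subseteq> B \<and> setmul m B UNIV \<subseteq> B"
proof -
  have LI: "\<And>a b c. m (m a b) c = m (m c b) a" using assms(1) unfolding AG_groupoid_def by blast
  have E: "\<And>a. m e a = a" using assms(2) unfolding left_identity_def by blast
  have med: "\<And>a b c d. m (m a b) (m c d) = m (m a c) (m b d)"
    by (metis LI)
  have sw: "\<And>a b c. m a (m b c) = m b (m a c)"
    by (metis E med)
  have BB: "\<And>x y. x \<in> B \<Longrightarrow> y \<in> B \<Longrightarrow> m x y \<in> B"
    using assms(3) unfolding bi_ideal_def setmul_def by blast
  have BSB: "\<And>x s y. x \<in> B \<Longrightarrow> y \<in> B \<Longrightarrow> m (m x s) y \<in> B"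
    using assms(3) unfolding bi_ideal_def setmul_def by blast
  have dec: "\<And>b. b \<in> B \<Longrightarrow> \<exists>x y. x \<in> B \<and> y \<in> B \<and> b = m x y"
    using assms(4) unfolding setmul_def by blast
  have SB: "\<And>s b. b \<in> B \<Longrightarrow> m s b \<in> B"
  proof -
    fix s b assume b: "b \<in> B"
    obtain b1 b2 where h: "b1 \<in> B" "b2 \<in> B" "b = m b1 b2" using dec[OF b] by blast
    obtain c1 c2 where c: "c1 \<in> B" "c2 \<in> B" "b1 = m c1 c2" using dec[OF h(1)] by blast
    have "m s b = m b1 (m s b2)" using h sw by simp
    also have "\<dots> = m (m (m s b2) c2) c1" using c by (simp only: LI[of c1 c2 "m s b2"])
    also have "\<dots> = m (m (m c2 b2) s) c1" by (simp only: LI[of s b2 c2])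
    finally show "m s b \<in> B" using BSB BB c h by simp
  qed
  have BS: "\<And>s b. b \<in> B \<Longrightarrow> m b s \<in> B"
  proof -
    fix s b assume b: "b \<in> B"
    obtain b1 b2 where h: "b1 \<in> B" "b2 \<in> B" "b = m b1 b2" using dec[OF b] by blast
    have "m b s = m (m s b2) b1" using h by (simp only: LI[of b1 b2 s])
    thus "m b s \<in> B" using BB SB h by simp
  qed
  show ?thesis unfolding setmul_def using SB BS by blast
qed

end
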